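(* Let $\delta$ be a positive integer, let $$p_\delta(x)=\left(\frac{1+\sqrt{1-4x}}{2}\right)^{\delta+1}+\left(\frac{1-\sqrt{1-4x}}{2}\right)^{\delta+1}$$ (a polynomial in $x$), let $d=\deg p_\delta$ and let $\vartheta_1,\dots,\vartheta_d$ be the roots of $p_\delta$. Then for every positive integer $m$, $$\zeta(m,\delta)=\frac{1}{\delta+1}\sum_{i=1}^{d}\left(\frac{1}{\vartheta_i}\right)^{\lfloor (m+1)/2\rfloor}.$$
   Context: For positive integers $m$ and $\delta$, a $\delta$-deviation set of size $m$ is a finite sequence $(\alpha_1,\dots,\alpha_\ell)$ of positive integers such that (i) $\sum_i\alpha_i=m$; (ii) $\big|\sum_i\alpha_{2i-1}-\sum_i\alpha_{2i}\big|\le 1$; (iii) $\big|\sum_{1\le i\le j}(-1)^{i-1}\alpha_i\big|\le\delta$ for every $j\ge1$; and $\zeta(m,\delta)$ is the number of $\delta$-deviation sets of size $m$. *)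

theory Defs
  imports Complex_Main "HOL-Computational_Algebra.Polynomial"
begin

text \<open>A finite sequence (alpha_1,...,alpha_l) is a list; entry alpha_{i+1} is alpha ! i.\<close>

definition alt_partial :: "nat list \<Rightarrow> nat \<Rightarrow> int" where
  "alt_partial \<alpha> j = (\<Sum>i<j. (-1) ^ i * int (\<alpha> ! i))"

definition deviation_set :: "nat \<Rightarrow> nat \<Rightarrow> nat list \<Rightarrow> bool" where
  "deviation_set m \<delta> \<alpha> \<longleftrightarrow>
     (\<forall>a\<in>set \<alpha>. 0 < a) \<and>
     sum_list \<alpha> = m \<and>
     \<bar>int (\<Sum>i | i < length \<alpha> \<and> even i. \<alpha> ! i)
        - int (\<Sum>i | i < length \<alpha> \<and> odd i. \<alpha> ! i)\<bar> \<le> 1 \<and>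
     (\<forall>j. 1 \<le> j \<longrightarrow> \<bar>alt_partial \<alpha> (min j (length \<alpha>))\<bar> \<le> int \<delta>)"

definition zeta :: "nat \<Rightarrow> nat \<Rightarrow> nat" where
  "zeta m \<delta> = card {\<alpha>. deviation_set m \<delta> \<alpha>}"

end

theory Submission
  imports Defs "HOL-Computational_Algebra.Polynomial_FPS" "HOL-Computational_Algebra.Fundamental_Theorem_Algebra"
begin
unbundle fps_syntax


definition LD :: "complex poly \<Rightarrow> complex fps \<Rightarrow> bool" where
  "LD A S \<longleftrightarrow> fps_of_poly A * S = - fps_X * fps_deriv (fps_of_poly A)"

lemma LD_one: "LD 1 0" by (simp add: LD_def)

lemma LD_mult: "LD A SA \<Longrightarrow> LD B SB \<Longrightarrow> LD (A * B) (SA + SB)"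
  unfolding LD_def fps_of_poly_mult
proof -
  assume a: "fps_of_poly A * SA = - fps_X * fps_deriv (fps_of_poly A)"
     and b: "fps_of_poly B * SB = - fps_X * fps_deriv (fps_of_poly B)"
  have "fps_of_poly A * fps_of_poly B * (SA + SB)
     = fps_of_poly B * (fps_of_poly A * SA) + fps_of_poly A * (fps_of_poly B * SB)"
    by (simp add: algebra_simps)
  also have "\<dots> = - fps_X * fps_deriv (fps_of_poly A * fps_of_poly B)"
    unfolding a b by (simp add: algebra_simps)
  finally show "fps_of_poly A * fps_of_poly B * (SA + SB) = - fps_X * fps_deriv (fps_of_poly A * fps_of_poly B)" .
qed

lemma LD_power: "LD A S \<Longrightarrow> LD (A ^ e) (of_nat e * S)"
proof (induction e)
  case 0 then show ?case by (simp add: LD_def)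
next
  case (Suc e)
  have "LD (A * A ^ e) (S + of_nat e * S)" by (rule LD_mult[OF Suc.prems Suc.IH[OF Suc.prems]])
  then show ?case by (simp add: algebra_simps)
qed

lemma LD_prod: "finite I \<Longrightarrow> (\<And>i. i \<in> I \<Longrightarrow> LD (f i) (S i)) \<Longrightarrow> LD (\<Prod>i\<in>I. f i) (\<Sum>i\<in>I. S i)"
proof (induction I rule: finite_induct)
  case empty then show ?case by (simp add: LD_one)
next
  case (insert x F)
  then show ?case by (simp add: LD_mult)
qed

lemma LD_smult: "LD A S \<Longrightarrow> LD (smult c A) S"
  unfolding LD_def fps_of_poly_smult
  by (metis fps_deriv_mult_const_left mult.assoc mult.left_commute)

definition Sr :: "complex \<Rightarrow> complex fps" where
  "Sr r = Abs_fps (\<lambda>k. if k = 0 then 0 else (1 / r) ^ k)"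

lemma LD_lin: assumes "r \<noteq> 0" shows "LD [:-r, 1:] (Sr r)"
  unfolding LD_def
proof (rule fps_ext)
  fix k
  have e: "fps_of_poly [:-r, 1:] = fps_const (-r) + fps_X"
    by (simp add: fps_of_poly_pCons fps_of_poly_const)
  show "(fps_of_poly [:-r, 1:] * Sr r) $ k = (- fps_X * fps_deriv (fps_of_poly [:- r, 1:])) $ k"
    unfolding e using assms
    by (cases k) (auto simp: Sr_def algebra_simps power_Suc2 simp del: power_Suc)
qed

lemma newton:
  fixes p :: "complex poly"
  assumes "p \<noteq> 0" "poly p 0 \<noteq> 0"
  shows "LD p (\<Sum>z\<in>{z. poly p z = 0}. of_nat (order z p) * Sr z)"
proof -
  have fin: "finite {z. poly p z = 0}" using assms(1) by (rule poly_roots_finite)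
  have "LD (smult (lead_coeff p) (\<Prod>z|poly p z = 0. [:-z, 1:] ^ order z p))
            (\<Sum>z\<in>{z. poly p z = 0}. of_nat (order z p) * Sr z)"
    apply (rule LD_smult, rule LD_prod[OF fin])
    apply (rule LD_power, rule LD_lin)
    using assms(2) by auto
  then show ?thesis by (simp add: complex_poly_decompose)
qed

definition Xp :: "complex poly" where "Xp = [:0,1:]"

fun Fp :: "nat \<Rightarrow> complex poly" where
  "Fp 0 = 0" | "Fp (Suc 0) = 1" | "Fp (Suc (Suc m)) = Fp (Suc m) - Xp * Fp m"

fun Lp :: "nat \<Rightarrow> complex poly" where
  "Lp 0 = [:2:]" | "Lp (Suc 0) = 1" | "Lp (Suc (Suc m)) = Lp (Suc m) - Xp * Lp m"

lemma Lp_F: "Lp (Suc m) = Fp (Suc m) - 2 * Xp * Fp m"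
proof (induction m rule: Lp.induct)
  case 1 then show ?case by simp
next
  case 2 then show ?case by (simp add: numeral_poly)
next
  case (3 m)
  have "Lp (Suc (Suc (Suc m))) = Lp (Suc (Suc m)) - Xp * Lp (Suc m)" by simp
  also have "\<dots> = (Fp (Suc (Suc m)) - 2 * Xp * Fp (Suc m)) - Xp * (Fp (Suc m) - 2 * Xp * Fp m)"
    by (simp only: 3)
  also have "\<dots> = Fp (Suc (Suc (Suc m))) - 2 * Xp * Fp (Suc (Suc m))"
    by (simp only: Fp.simps(3)) (simp add: algebra_simps)
  finally show ?case .
qed

lemma Lp_deriv: "pderiv (Lp (Suc m)) = - (of_nat (Suc m) * Fp m)"
proof (induction m rule: Lp.induct)
  case 1 then show ?case by simp
next
  case 2 then show ?case by (simp add: pderiv_pCons pderiv_mult numeral_poly pderiv_diff Xp_def)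
next
  case (3 m)
  have "pderiv (Lp (Suc (Suc (Suc m)))) = pderiv (Lp (Suc (Suc m))) - Lp (Suc m) - Xp * pderiv (Lp (Suc m))"
    by (simp add: pderiv_diff pderiv_mult pderiv_pCons Xp_def)
  also have "\<dots> = - (of_nat (Suc (Suc m)) * Fp (Suc m)) - (Fp (Suc m) - 2 * Xp * Fp m)
        + Xp * (of_nat (Suc m) * Fp m)"
    using 3 Lp_F[of m] by simp
  also have "\<dots> = - (of_nat (Suc (Suc (Suc m))) * Fp (Suc (Suc m)))"
    by (simp add: algebra_simps)
  finally show ?case .
qed

lemma poly_Lp:
  assumes "a + b = 1" "a * b = x"
  shows "poly (Lp m) x = a ^ m + b ^ m"
proof (induction m rule: Lp.induct)
  case 1 then show ?case by simp
next
  case 2 then show ?case using assms by simp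
next
  case (3 m)
  have e3: "poly (Lp (Suc (Suc m))) x = poly (Lp (Suc m)) x - x * poly (Lp m) x" by (simp add: Xp_def)
  have b: "b = 1 - a" using assms(1) by (simp add: algebra_simps)
  have aa: "a * a = a - x" using assms unfolding b by (simp add: algebra_simps)
  have bb: "b * b = b - x" using assms unfolding b by (simp add: algebra_simps)
  have ea: "a ^ Suc (Suc m) = a ^ Suc m - x * a ^ m"
  proof -
    have "a ^ Suc (Suc m) = a ^ m * (a * a)" by (simp add: algebra_simps)
    also have "\<dots> = a ^ Suc m - x * a ^ m" unfolding aa by (simp add: algebra_simps)
    finally show ?thesis .
  qed
  have eb: "b ^ Suc (Suc m) = b ^ Suc m - x * b ^ m"
  proof -
    have "b ^ Suc (Suc m) = b ^ m * (b * b)" by (simp add: algebra_simps)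
    also have "\<dots> = b ^ Suc m - x * b ^ m" unfolding bb by (simp add: algebra_simps)
    finally show ?thesis .
  qed
  show ?case using 3 ea eb e3 by (simp add: algebra_simps Xp_def)
qed

fun R :: "nat \<Rightarrow> nat \<Rightarrow> int \<Rightarrow> nat" where
  "R d 0 h = (if h = 0 then 1 else 0)"
| "R d (Suc k) h = (if \<bar>h\<bar> \<le> int d then R d k (h - 1) + R d k (h + 1) else 0)"

lemma R_sym: "R d k (- h) = R d k h"
proof (induction k arbitrary: h)
  case 0 then show ?case by simp
next
  case (Suc k)
  have "R d k (- h - 1) = R d k (h + 1)" proof -
    have "- h - 1 = - (h + 1)" by simp
    then show ?thesis using Suc[of "h + 1"] by metis
  qed
  moreover have "R d k (- h + 1) = R d k (h - 1)" proof -
    have "- h + 1 = - (h - 1)" by simp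
    then show ?thesis using Suc[of "h - 1"] by metis
  qed
  ultimately show ?case by simp
qed

definition H :: "nat \<Rightarrow> nat \<Rightarrow> complex fps" where
  "H d h = Abs_fps (\<lambda>j. if h \<le> 2 * j then of_nat (R d (2 * j - h) (int h)) else 0)"

lemma H_nth: "H d h $ j = (if h \<le> 2 * j then of_nat (R d (2 * j - h) (int h)) else 0)"
  by (simp add: H_def)

lemma H_rec:
  assumes "1 \<le> h" "h \<le> d"
  shows "H d (Suc h) = H d h - fps_X * H d (h - 1)"
proof (rule fps_ext)
  fix j
  have X: "(fps_X * H d (h - 1)) $ j = (if j = 0 then 0 else H d (h - 1) $ (j - 1))" by simp
  consider "2 * j < h" | "2 * j = h" | "h < 2 * j" by linarith
  then show "H d (Suc h) $ j = (H d h - fps_X * H d (h - 1)) $ j"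
  proof cases
    case 1
    have a: "H d (Suc h) $ j = 0" using 1 by (simp add: H_nth)
    have b: "H d h $ j = 0" using 1 by (simp add: H_nth)
    have c: "(fps_X * H d (h - 1)) $ j = 0"
    proof (cases "j = 0")
      case False
      then have "\<not> h - 1 \<le> 2 * (j - 1)" using 1 by linarith
      then show ?thesis unfolding X H_nth using False by simp
    qed (simp add: X)
    show ?thesis by (simp only: a b c fps_sub_nth) simp
  next
    case 2
    have a: "H d (Suc h) $ j = 0" using 2 by (simp add: H_nth)
    have b: "H d h $ j = 0" using 2 assms by (simp add: H_nth)
    have c: "(fps_X * H d (h - 1)) $ j = 0"
    proof (cases "j = 0")
      case False
      then have "\<not> h - 1 \<le> 2 * (j - 1)" using 2 by linarith
      then show ?thesis unfolding X H_nth using False by simp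
    qed (simp add: X)
    show ?thesis by (simp only: a b c fps_sub_nth) simp
  next
    case 3
    define k where "k = 2 * j - Suc h"
    have k: "2 * j = h + Suc k" using 3 unfolding k_def by linarith
    have jp: "j \<noteq> 0" using k assms by auto
    have e1: "2 * j - Suc h = k" using k by linarith
    have e2: "2 * j - h = Suc k" using k by linarith
    have e3: "2 * (j - 1) - (h - 1) = k" using k assms jp by linarith
    have a: "H d (Suc h) $ j = of_nat (R d k (int h + 1))" using k e1 by (simp add: H_nth add.commute)
    have b: "H d h $ j = of_nat (R d (Suc k) (int h))" using k e2 by (simp add: H_nth)
    have c: "(fps_X * H d (h - 1)) $ j = of_nat (R d k (int h - 1))"
    proof -
      have "h - 1 \<le> 2 * (j - 1)" using k jp assms by linarith
      moreover have "int (h - 1) = int h - 1" using assms by linarith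
      ultimately show ?thesis unfolding X H_nth e3 using jp by simp
    qed
    have "R d (Suc k) (int h) = R d k (int h - 1) + R d k (int h + 1)" using assms by simp
    then show ?thesis by (simp only: a b c fps_sub_nth) simp
  qed
qed

lemma H_top: "H d (Suc d) = 0"
proof (rule fps_ext)
  fix j
  have "R d k (int (Suc d)) = 0" for k by (cases k) auto
  then show "H d (Suc d) $ j = 0 $ j" by (simp add: H_def)
qed

lemma H_zero: "H d 0 = 1 + 2 * H d 1"
proof (rule fps_ext)
  fix j
  show "H d 0 $ j = (1 + 2 * H d 1) $ j"
  proof (cases j)
    case 0 then show ?thesis by (simp add: H_def)
  next
    case (Suc i)
    have g: "R d (Suc k) 0 = R d k (-1) + R d k 1" for k by simp
    have s1: "R d k (-1) = R d k 1" for k using R_sym[of d k 1] by simp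
    have "R d (2 * Suc i) 0 = 2 * R d (2 * Suc i - 1) 1"
    proof -
      have e: "2 * Suc i = Suc (2 * i + 1)" by simp
      show ?thesis unfolding e g s1 by simp
    qed
    then show ?thesis using Suc by (simp add: H_def numeral_fps_const)
  qed
qed

definition FF :: "nat \<Rightarrow> complex fps" where "FF m = fps_of_poly (Fp m)"

lemma FF_rec: "FF (Suc (Suc m)) = FF (Suc m) - fps_X * FF m"
  by (simp add: FF_def fps_of_poly_diff fps_of_poly_mult Xp_def)

lemma H_sol:
  assumes "Suc h \<le> Suc d"
  shows "H d (Suc h) = H d 1 * FF (Suc h) - fps_X * H d 0 * FF h
      \<and> (Suc (Suc h) \<le> Suc d \<longrightarrow> H d (Suc (Suc h)) = H d 1 * FF (Suc (Suc h)) - fps_X * H d 0 * FF (Suc h))"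
  using assms
proof (induction h)
  case 0
  have "H d 2 = H d 1 - fps_X * H d 0" if "1 \<le> d" using H_rec[of 1 d] that by (simp add: numeral_2_eq_2)
  then show ?case by (simp add: FF_def numeral_2_eq_2)
next
  case (Suc h)
  have "H d (Suc (Suc (Suc h))) = H d (Suc (Suc h)) - fps_X * H d (Suc h)" if "Suc (Suc (Suc h)) \<le> Suc d"
    using H_rec[of "Suc (Suc h)" d] that by simp
  then show ?case using Suc by (auto simp: FF_rec algebra_simps)
qed

lemma H_key: "H d 1 * fps_of_poly (Lp (Suc d)) = fps_X * FF d"
proof -
  have "0 = H d 1 * FF (Suc d) - fps_X * H d 0 * FF d"
    using H_sol[of d d] H_top[of d] by simp
  also have "\<dots> = H d 1 * (FF (Suc d) - 2 * fps_X * FF d) - fps_X * FF d"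
    by (simp add: H_zero algebra_simps)
  finally have "H d 1 * (FF (Suc d) - 2 * fps_X * FF d) = fps_X * FF d" by simp
  moreover have "fps_of_poly (Lp (Suc d)) = FF (Suc d) - 2 * fps_X * FF d"
    by (simp add: Lp_F FF_def fps_of_poly_diff fps_of_poly_mult Xp_def numeral_poly)
  ultimately show ?thesis by simp
qed

lemma partB:
  fixes \<delta> k :: nat and p :: "complex poly"
  assumes "1 \<le> k"
    and hp: "\<forall>x. poly p x = ((1 + csqrt (1 - 4 * x)) / 2) ^ (\<delta> + 1)
                        + ((1 - csqrt (1 - 4 * x)) / 2) ^ (\<delta> + 1)"
  shows "of_nat (\<delta> + 1) * of_nat (R \<delta> (2 * k - 1) 1)
       = (\<Sum>r\<in>{r. poly p r = 0}. of_nat (order r p) * (1 / r) ^ k)"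
proof -
  have pL: "p = Lp (Suc \<delta>)"
  proof -
    have "poly p x = poly (Lp (Suc \<delta>)) x" for x
    proof -
      define a where "a = (1 + csqrt (1 - 4 * x)) / 2"
      define b where "b = (1 - csqrt (1 - 4 * x)) / 2"
      have ab1: "a + b = 1" unfolding a_def b_def by (simp add: field_simps)
      have "a * b = (1 - (csqrt (1 - 4 * x))\<^sup>2) / 4" unfolding a_def b_def
        by (simp add: field_simps power2_eq_square)
      then have ab2: "a * b = x" by simp
      show ?thesis using hp poly_Lp[OF ab1 ab2, of "Suc \<delta>"] unfolding a_def b_def by simp
    qed
    then show ?thesis by (simp add: poly_eq_poly_eq_iff[symmetric] fun_eq_iff)
  qed
  have p0: "poly p 0 = 1" using hp by simp
  then have pnz: "p \<noteq> 0" by auto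
  define S where "S = (\<Sum>z\<in>{z. poly p z = 0}. of_nat (order z p) * Sr z)"
  have LDp: "LD p S" unfolding S_def by (rule newton[OF pnz]) (simp add: p0)
  have der: "fps_deriv (fps_of_poly p) = - (fps_const (of_nat (Suc \<delta>)) * FF \<delta>)"
    unfolding pL fps_of_poly_pderiv[symmetric] Lp_deriv FF_def
    by (simp add: of_nat_poly fps_of_poly_smult fps_of_poly_uminus)
  have "fps_of_poly p * S = fps_of_poly p * (fps_const (of_nat (Suc \<delta>)) * H \<delta> 1)"
  proof -
    have "fps_of_poly p * S = fps_X * (fps_const (of_nat (Suc \<delta>)) * FF \<delta>)"
      using LDp unfolding LD_def der by simp
    also have "\<dots> = fps_const (of_nat (Suc \<delta>)) * (H \<delta> 1 * fps_of_poly (Lp (Suc \<delta>)))"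
      unfolding H_key by (simp add: ac_simps)
    finally show ?thesis unfolding pL by (simp add: ac_simps)
  qed
  moreover have "fps_of_poly p \<noteq> 0" using pnz by (simp add: fps_of_poly_eq_iff[of p 0, simplified])
  ultimately have SH: "S = fps_const (of_nat (Suc \<delta>)) * H \<delta> 1" by simp
  have "S $ k = (\<Sum>r\<in>{r. poly p r = 0}. of_nat (order r p) * (1 / r) ^ k)"
    unfolding S_def fps_sum_nth using assms(1)
    by (intro sum.cong refl) (simp add: fps_of_nat[symmetric] Sr_def)
  moreover have "S $ k = of_nat (\<delta> + 1) * of_nat (R \<delta> (2 * k - 1) 1)"
    unfolding SH using assms(1) by (simp add: H_nth)
  ultimately show ?thesis by simp
qed



fun ok :: "nat \<Rightarrow> int \<Rightarrow> int \<Rightarrow> nat list \<Rightarrow> bool" where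
  "ok d s e [] = (\<bar>s\<bar> \<le> 1)"
| "ok d s e (a # r) = (\<bar>s + e * int a\<bar> \<le> int d \<and> ok d (s + e * int a) (- e) r)"

lemma alt_partial_Nil: "alt_partial \<alpha> 0 = 0" by (simp add: alt_partial_def)

lemma alt_partial_Cons: "alt_partial (a # r) (Suc j) = int a - alt_partial r j"
  unfolding alt_partial_def sum.lessThan_Suc_shift
  by (simp add: sum_negf)

lemma alt_partial_1: "alt_partial (a # r) (Suc 0) = int a"
  by (simp add: alt_partial_def)

lemma ok_iff:
  "ok d s e \<alpha> \<longleftrightarrow> \<bar>s + e * alt_partial \<alpha> (length \<alpha>)\<bar> \<le> 1 \<and>
     (\<forall>j. 1 \<le> j \<longrightarrow> j \<le> length \<alpha> \<longrightarrow> \<bar>s + e * alt_partial \<alpha> j\<bar> \<le> int d)"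
proof (induction \<alpha> arbitrary: s e)
  case Nil then show ?case by (simp add: alt_partial_Nil)
next
  case (Cons a r)
  have A: "(\<forall>j. 1 \<le> j \<longrightarrow> j \<le> length (a # r) \<longrightarrow> \<bar>s + e * alt_partial (a # r) j\<bar> \<le> int d)
     \<longleftrightarrow> \<bar>s + e * int a\<bar> \<le> int d \<and>
         (\<forall>j. 1 \<le> j \<longrightarrow> j \<le> length r \<longrightarrow> \<bar>s + e * int a + - e * alt_partial r j\<bar> \<le> int d)"
  proof safe
    fix j assume H: "\<forall>j. 1 \<le> j \<longrightarrow> j \<le> length (a # r) \<longrightarrow> \<bar>s + e * alt_partial (a # r) j\<bar> \<le> int d"
    show "\<bar>s + e * int a\<bar> \<le> int d" using H[rule_format, of 1]
      by (simp add: alt_partial_1)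
    assume "1 \<le> j" "j \<le> length r"
    then show "\<bar>s + e * int a + - e * alt_partial r j\<bar> \<le> int d"
      using H[rule_format, of "Suc j"] by (simp add: alt_partial_Cons algebra_simps)
  next
    fix j assume H1: "\<bar>s + e * int a\<bar> \<le> int d"
      and H2: "\<forall>j. 1 \<le> j \<longrightarrow> j \<le> length r \<longrightarrow> \<bar>s + e * int a + - e * alt_partial r j\<bar> \<le> int d"
      and j: "1 \<le> j" "j \<le> length (a # r)"
    then obtain i where i: "j = Suc i" by (cases j) auto
    show "\<bar>s + e * alt_partial (a # r) j\<bar> \<le> int d"
    proof (cases i)
      case 0 then show ?thesis using H1 i by (simp add: alt_partial_Cons alt_partial_Nil)
    next
      case (Suc i')
      then show ?thesis using H2[rule_format, of i] i j by (simp add: alt_partial_Cons algebra_simps)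
    qed
  qed
  have B: "\<bar>s + e * alt_partial (a # r) (length (a # r))\<bar> = \<bar>s + e * int a + - e * alt_partial r (length r)\<bar>"
    by (simp add: alt_partial_Cons algebra_simps)
  show ?case unfolding ok.simps Cons.IH A B by blast
qed

lemma alt_sum_split:
  "(\<Sum>i<n. (-1) ^ i * int (g i)) =
     int (\<Sum>i | i < n \<and> even i. g i) - int (\<Sum>i | i < n \<and> odd i. g i)"
proof (induction n)
  case 0 then show ?case by simp
next
  case (Suc n)
  have e: "{i. i < Suc n \<and> P i} = (if P n then insert n {i. i < n \<and> P i} else {i. i < n \<and> P i})" for P
    by (auto simp: less_Suc_eq)
  show ?case
    by (cases "even n") (simp_all add: e Suc.IH)
qed

lemma deviation_ok:
  "deviation_set m d \<alpha> \<longleftrightarrow> (\<forall>a\<in>set \<alpha>. 0 < a) \<and> sum_list \<alpha> = m \<and> ok d 0 1 \<alpha>"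
proof -
  have ii: "int (\<Sum>i | i < length \<alpha> \<and> even i. \<alpha> ! i) - int (\<Sum>i | i < length \<alpha> \<and> odd i. \<alpha> ! i)
      = alt_partial \<alpha> (length \<alpha>)"
    unfolding alt_partial_def by (rule alt_sum_split[symmetric])
  have iii: "(\<forall>j. 1 \<le> j \<longrightarrow> \<bar>alt_partial \<alpha> (min j (length \<alpha>))\<bar> \<le> int d) \<longleftrightarrow>
      (\<forall>j. 1 \<le> j \<longrightarrow> j \<le> length \<alpha> \<longrightarrow> \<bar>alt_partial \<alpha> j\<bar> \<le> int d)"
  proof safe
    fix j assume H: "\<forall>j. 1 \<le> j \<longrightarrow> \<bar>alt_partial \<alpha> (min j (length \<alpha>))\<bar> \<le> int d"
      and j: "1 \<le> j" "j \<le> length \<alpha>"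
    then show "\<bar>alt_partial \<alpha> j\<bar> \<le> int d" using H[rule_format, of j] by simp
  next
    fix j :: nat assume H: "\<forall>j. 1 \<le> j \<longrightarrow> j \<le> length \<alpha> \<longrightarrow> \<bar>alt_partial \<alpha> j\<bar> \<le> int d"
      and j: "1 \<le> j"
    show "\<bar>alt_partial \<alpha> (min j (length \<alpha>))\<bar> \<le> int d"
    proof (cases "length \<alpha> = 0")
      case True then show ?thesis by (simp add: alt_partial_Nil)
    next
      case False
      then have "1 \<le> min j (length \<alpha>)" "min j (length \<alpha>) \<le> length \<alpha>" using j by (auto simp: Suc_le_eq)
      then show ?thesis using H by blast
    qed
  qed
  show ?thesis unfolding deviation_set_def ii iii ok_iff by simp
qed

definition SS :: "nat \<Rightarrow> nat \<Rightarrow> int \<Rightarrow> int \<Rightarrow> nat list set" where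
  "SS d m s e = {\<alpha>. (\<forall>a\<in>set \<alpha>. 0 < a) \<and> sum_list \<alpha> = m \<and> ok d s e \<alpha>}"

lemma length_le_sum: "(\<forall>a\<in>set \<alpha>. 0 < (a::nat)) \<Longrightarrow> length \<alpha> \<le> sum_list \<alpha>"
  by (induction \<alpha>) auto

lemma finite_SS: "finite (SS d m s e)"
proof -
  have "SS d m s e \<subseteq> {xs. set xs \<subseteq> {0..m} \<and> length xs \<le> m}"
    unfolding SS_def using length_le_sum member_le_sum_list by fastforce
  moreover have "finite {xs. set xs \<subseteq> {0..m} \<and> length xs \<le> m}"
    by (rule finite_lists_length_le) simp
  ultimately show ?thesis by (rule finite_subset)
qed

fun P :: "nat \<Rightarrow> nat \<Rightarrow> int \<Rightarrow> nat" where
  "P d 0 h = (if \<bar>h\<bar> \<le> 1 \<and> \<bar>h\<bar> \<le> int d then 1 else 0)"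
| "P d (Suc n) h = (if \<bar>h\<bar> \<le> int d then P d n (h - 1) + P d n (h + 1) else 0)"

lemma P_out: "\<not> \<bar>h\<bar> \<le> int d \<Longrightarrow> P d n h = 0"
  by (cases n) auto

lemma SS_one: "SS d 1 s e = (if \<bar>s + e\<bar> \<le> 1 \<and> \<bar>s + e\<bar> \<le> int d then {[1]} else {})"
proof -
  have "(\<forall>a\<in>set \<alpha>. 0 < a) \<and> sum_list \<alpha> = 1 \<longleftrightarrow> \<alpha> = [1]" for \<alpha> :: "nat list"
  proof
    assume H: "(\<forall>a\<in>set \<alpha>. 0 < a) \<and> sum_list \<alpha> = 1"
    then obtain a r where \<alpha>: "\<alpha> = a # r" by (cases \<alpha>) auto
    have ap: "0 < a" using H \<alpha> by simp
    have su: "a + sum_list r = 1" using H \<alpha> by simp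
    have a1: "a = 1" using ap su by linarith
    have r0: "sum_list r = 0" using ap su by linarith
    have "r = []"
    proof (cases r)
      case (Cons b r')
      then have "0 < b" using H \<alpha> by auto
      then show ?thesis using r0 Cons by simp
    qed
    then show "\<alpha> = [1]" using \<alpha> a1 by auto
  qed auto
  then have "SS d 1 s e = {\<alpha>. \<alpha> = [1] \<and> ok d s e \<alpha>}" unfolding SS_def by blast
  also have "\<dots> = (if ok d s e [1] then {[1]} else {})" by auto
  also have "ok d s e [1] \<longleftrightarrow> \<bar>s + e\<bar> \<le> 1 \<and> \<bar>s + e\<bar> \<le> int d" by auto
  finally show ?thesis by simp
qed

lemma SS_step:
  assumes e: "e = 1 \<or> e = -1" and s: "\<bar>s\<bar> \<le> int d" and m: "2 \<le> m"
  shows "SS d m s e = (if \<bar>s + e\<bar> \<le> int d then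
           (\<lambda>r. 1 # r) ` SS d (m - 1) (s + e) (- e) \<union> (\<lambda>\<beta>. Suc (hd \<beta>) # tl \<beta>) ` SS d (m - 1) (s + e) e
         else {})"
proof (cases "\<bar>s + e\<bar> \<le> int d")
  case False
  have "\<alpha> \<notin> SS d m s e" for \<alpha>
  proof
    assume "\<alpha> \<in> SS d m s e"
    then obtain a r where \<alpha>: "\<alpha> = a # r" and a: "0 < a" and b: "\<bar>s + e * int a\<bar> \<le> int d"
      unfolding SS_def using m by (cases \<alpha>) auto
    show False using e s a b False by auto
  qed
  then show ?thesis using False by auto
next
  case True
  show ?thesis
  proof (simp only: True if_True, intro equalityI subsetI)
    fix \<alpha> assume A: "\<alpha> \<in> SS d m s e"
    then obtain a r where \<alpha>: "\<alpha> = a # r" unfolding SS_def using m by (cases \<alpha>) auto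
    show "\<alpha> \<in> (\<lambda>r. 1 # r) ` SS d (m - 1) (s + e) (- e) \<union> (\<lambda>\<beta>. Suc (hd \<beta>) # tl \<beta>) ` SS d (m - 1) (s + e) e"
    proof (cases "a = 1")
      case True
      then have "r \<in> SS d (m - 1) (s + e) (- e)" using A \<alpha> unfolding SS_def by auto
      then show ?thesis using \<alpha> True by blast
    next
      case False
      then have a2: "a - 1 > 0" using A \<alpha> unfolding SS_def by auto
      have eq: "s + e + e * int (a - 1) = s + e * int a" using a2 by (simp add: algebra_simps of_nat_diff)
      have eq2: "s + e + e * (int a - 1) = s + e * int a" by (simp add: algebra_simps)
      have "(a - 1) # r \<in> SS d (m - 1) (s + e) e" using A \<alpha> a2 unfolding SS_def by (auto simp: eq eq2)
      moreover have "\<alpha> = Suc (hd ((a - 1) # r)) # tl ((a - 1) # r)" using \<alpha> a2 by simp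
      ultimately show ?thesis by blast
    qed
  next
    fix \<alpha> assume A: "\<alpha> \<in> (\<lambda>r. 1 # r) ` SS d (m - 1) (s + e) (- e) \<union> (\<lambda>\<beta>. Suc (hd \<beta>) # tl \<beta>) ` SS d (m - 1) (s + e) e"
    then show "\<alpha> \<in> SS d m s e"
    proof
      assume "\<alpha> \<in> (\<lambda>r. 1 # r) ` SS d (m - 1) (s + e) (- e)"
      then obtain r where "\<alpha> = 1 # r" "r \<in> SS d (m - 1) (s + e) (- e)" by blast
      then show ?thesis using True m unfolding SS_def by auto
    next
      assume "\<alpha> \<in> (\<lambda>\<beta>. Suc (hd \<beta>) # tl \<beta>) ` SS d (m - 1) (s + e) e"
      then obtain \<beta> where \<alpha>: "\<alpha> = Suc (hd \<beta>) # tl \<beta>" and B: "\<beta> \<in> SS d (m - 1) (s + e) e" by blast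
      then obtain b r where \<beta>: "\<beta> = b # r" unfolding SS_def using m by (cases \<beta>) auto
      have eq: "s + e + e * int b = s + e * int (Suc b)" by (simp add: algebra_simps)
      show ?thesis using B m unfolding \<alpha> \<beta> SS_def by (auto simp: eq)
    qed
  qed
qed

lemma card_SS:
  assumes e: "e = 1 \<or> e = -1" and s: "\<bar>s\<bar> \<le> int d" and m: "1 \<le> m"
  shows "card (SS d m s e) = P d (m - 1) (s + e)"
  using m s e
proof (induction m arbitrary: s e rule: nat_induct_at_least)
  case base
  then show ?case using SS_one[of d s e] by simp
next
  case (Suc m)
  show ?case
  proof (cases "\<bar>s + e\<bar> \<le> int d")
    case False
    then show ?thesis using SS_step[OF Suc.prems(2) Suc.prems(1), of "Suc m"] Suc.hyps by (simp add: P_out)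
  next
    case True
    let ?A = "(\<lambda>r. 1 # r) ` SS d m (s + e) (- e)"
    let ?B = "(\<lambda>\<beta>. Suc (hd \<beta>) # tl \<beta>) ` SS d m (s + e) e"
    have eqS: "SS d (Suc m) s e = ?A \<union> ?B"
      using SS_step[OF Suc.prems(2) Suc.prems(1), of "Suc m"] Suc.hyps True by simp
    have hdpos: "0 < hd \<beta>" if "\<beta> \<in> SS d m (s + e) e" for \<beta>
    proof -
      have "\<beta> \<noteq> []" using that Suc.hyps unfolding SS_def by auto
      then have "hd \<beta> \<in> set \<beta>" by simp
      then show ?thesis using that unfolding SS_def by blast
    qed
    have disj: "?A \<inter> ?B = {}" by (auto dest: hdpos)
    have injB: "inj_on (\<lambda>\<beta>. Suc (hd \<beta>) # tl \<beta>) (SS d m (s + e) e)"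
    proof (rule inj_onI)
      fix x y assume x: "x \<in> SS d m (s + e) e" and y: "y \<in> SS d m (s + e) e"
        and xy: "Suc (hd x) # tl x = Suc (hd y) # tl y"
      have "x \<noteq> []" using x Suc.hyps unfolding SS_def by (cases x) auto
      moreover have "y \<noteq> []" using y Suc.hyps unfolding SS_def by (cases y) auto
      ultimately
      show "x = y" using xy by (metis list.collapse list.inject nat.inject)
    qed
    have "card (SS d (Suc m) s e) = card ?A + card ?B"
      unfolding eqS by (intro card_Un_disjoint finite_imageI finite_SS disj)
    also have "card ?A = card (SS d m (s + e) (- e))" by (rule card_image) (auto intro: inj_onI)
    also have "card ?B = card (SS d m (s + e) e)" by (rule card_image[OF injB])
    also have "card (SS d m (s + e) (- e)) = P d (m - 1) (s + e - e)"
      using Suc.IH[of "s + e" "- e"] True Suc.prems by auto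
    also have "card (SS d m (s + e) e) = P d (m - 1) (s + e + e)"
      using Suc.IH[of "s + e" e] True Suc.prems by auto
    also have "P d (m - 1) (s + e - e) + P d (m - 1) (s + e + e) = P d (Suc m - 1) (s + e)"
    proof -
      have sm: "Suc m - 1 = Suc (m - 1)" using Suc.hyps by simp
      have u: "P d (Suc (m - 1)) (s + e) = P d (m - 1) (s + e - 1) + P d (m - 1) (s + e + 1)"
        by (subst P.simps(2)) (simp add: True)
      have "(s + e - e = s + e - 1 \<and> s + e + e = s + e + 1) \<or> (s + e - e = s + e + 1 \<and> s + e + e = s + e - 1)"
        using Suc.prems(2) by auto
      then show ?thesis unfolding sm u by (metis add.commute)
    qed
    finally show ?thesis .
  qed
qed

lemma P_R:
  assumes "1 \<le> d"
  shows "P d n h = (if even (int n + h) then R d n h else R d (Suc n) h)"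
proof (induction n arbitrary: h)
  case 0
  show ?case using assms by (auto simp: abs_le_iff) presburger+
next
  case (Suc n)
  show ?case using Suc.IH[of "h - 1"] Suc.IH[of "h + 1"] by auto
qed

lemma zeta_R:
  assumes "1 \<le> d" "1 \<le> m"
  shows "zeta m d = R d (2 * ((m + 1) div 2) - 1) 1"
proof -
  have "{\<alpha>. deviation_set m d \<alpha>} = SS d m 0 1" unfolding SS_def deviation_ok by simp
  then have "zeta m d = P d (m - 1) 1" unfolding zeta_def using card_SS[of 1 0 d m] assms by simp
  also have "\<dots> = R d (2 * ((m + 1) div 2) - 1) 1"
    unfolding P_R[OF assms(1)]
  proof (cases "even m")
    case True
    then show "(if even (int (m - 1) + 1) then R d (m - 1) 1 else R d (Suc (m - 1)) 1) = R d (2 * ((m + 1) div 2) - 1) 1"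
      using assms(2) by (auto elim!: evenE)
  next
    case False
    then show "(if even (int (m - 1) + 1) then R d (m - 1) 1 else R d (Suc (m - 1)) 1) = R d (2 * ((m + 1) div 2) - 1) 1"
      using assms(2) by (auto elim!: oddE)
  qed
  finally show ?thesis .
qed


theorem theorem3:
  fixes \<delta> m :: nat and p :: "complex poly"
  assumes "0 < \<delta>" and "0 < m"
    and "\<forall>x. poly p x = ((1 + csqrt (1 - 4 * x)) / 2) ^ (\<delta> + 1)
                        + ((1 - csqrt (1 - 4 * x)) / 2) ^ (\<delta> + 1)"
  shows "of_nat (zeta m \<delta>) =
    1 / of_nat (\<delta> + 1) * (\<Sum>r\<in>{r. poly p r = 0}. of_nat (order r p) * (1 / r) ^ ((m + 1) div 2))"
proof -
  have k1: "1 \<le> (m + 1) div 2" using assms(2) by simp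
  have z: "zeta m \<delta> = R \<delta> (2 * ((m + 1) div 2) - 1) 1"
    using zeta_R[of \<delta> m] assms(1,2) by simp
  have pb: "of_nat (\<delta> + 1) * of_nat (R \<delta> (2 * ((m + 1) div 2) - 1) 1)
       = (\<Sum>r\<in>{r. poly p r = 0}. of_nat (order r p) * (1 / r) ^ ((m + 1) div 2))"
    by (rule partB[OF k1 assms(3)])
  have nz: "(of_nat (\<delta> + 1) :: complex) \<noteq> 0" by (simp only: of_nat_eq_0_iff)
  show ?thesis unfolding z pb[symmetric] using nz by (simp only: mult.assoc[symmetric] divide_inverse mult_1 left_inverse) simp
qed

end
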